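(* For every $0<R<\frac12\sqrt{\frac{3}{8\pi}}$ the map $T$ sends $\mathcal{C}^0_R$ into $\mathcal{C}^0_R$.
   Context: Let $\rho_*(R)=\frac{16\pi}{3}R^2$ and $\mathcal{C}^0_R=\{(m,\rho):[0,R]\to\mathbb{R}^2 \text{ continuous}:\ 0\le m(r)\le \frac{4\pi}{3}\rho_*(R)r^3,\ 0\le\rho(r)\le\rho_*(R)\}$. Define $T[m,\rho]=(M[\rho],P[m,\rho])$ with $M[\rho](r)=\int_0^r 4\pi s^2\rho(s)\,ds$ and $P[m,\rho](r)=\int_r^R \frac{1+2\rho(s)}{1-\frac{8\pi}{3}s^2-\frac{2m(s)}{s}}\,\frac{4\pi s}{3}\Big[1+3\rho(s)+\frac{3m(s)}{4\pi s^3}\Big]ds$. *)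

theory Defs
  imports "HOL-Analysis.Analysis"
begin

definition rho_star :: "real \<Rightarrow> real" where
  "rho_star R = 16 * pi / 3 * R^2"

definition C0 :: "real \<Rightarrow> ((real \<Rightarrow> real) \<times> (real \<Rightarrow> real)) set" where
  "C0 R = {(m, rho). continuous_on {0..R} m \<and> continuous_on {0..R} rho \<and>
     (\<forall>r\<in>{0..R}. 0 \<le> m r \<and> m r \<le> 4 * pi / 3 * rho_star R * r^3 \<and>
                  0 \<le> rho r \<and> rho r \<le> rho_star R)}"

definition M_op :: "(real \<Rightarrow> real) \<Rightarrow> real \<Rightarrow> real" where
  "M_op rho r = integral {0..r} (\<lambda>s. 4 * pi * s^2 * rho s)"

definition P_op :: "real \<Rightarrow> (real \<Rightarrow> real) \<Rightarrow> (real \<Rightarrow> real) \<Rightarrow> real \<Rightarrow> real" where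
  "P_op R m rho r = integral {r..R} (\<lambda>s.
      (1 + 2 * rho s) / (1 - 8 * pi / 3 * s^2 - 2 * m s / s) *
      (4 * pi * s / 3) * (1 + 3 * rho s + 3 * m s / (4 * pi * s^3)))"

definition T_op :: "real \<Rightarrow> (real \<Rightarrow> real) \<times> (real \<Rightarrow> real) \<Rightarrow> (real \<Rightarrow> real) \<times> (real \<Rightarrow> real)" where
  "T_op R mr = (M_op (snd mr), P_op R (fst mr) (snd mr))"

end

theory Submission imports Defs begin

lemma squeeze_cont:
  fixes m :: "real \<Rightarrow> real"
  assumes cm: "continuous_on {0..R} m" and n: "n \<ge> 1"
    and b: "\<And>s. s \<in> {0..R} \<Longrightarrow> \<bar>m s\<bar> \<le> K * s^(n+1)"
  shows "continuous_on {0..R} (\<lambda>s. m s / s^n)"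
  unfolding continuous_on_eq_continuous_within
proof
  fix x assume x: "x \<in> {0..R}"
  show "continuous (at x within {0..R}) (\<lambda>s. m s / s^n)"
  proof (cases "x = 0")
    case True
    have "((\<lambda>s. m s / s^n) \<longlongrightarrow> 0) (at 0 within {0..R})"
    proof (rule Lim_null_comparison)
      show "\<forall>\<^sub>F s in at 0 within {0..R}. norm (m s / s^n) \<le> K * \<bar>s\<bar>"
        unfolding eventually_at_filter
      proof (intro always_eventually allI impI)
        fix s assume "s \<noteq> 0" "s \<in> {0..R}"
        then have sp: "s > 0" by auto
        have "norm (m s / s^n) = \<bar>m s\<bar> / s^n" using sp by (simp add: abs_divide)
        also have "\<dots> \<le> K * s^(n+1) / s^n" using b[OF \<open>s \<in> _\<close>] sp
          by (intro divide_right_mono) auto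
        also have "\<dots> = K * \<bar>s\<bar>" using sp by (simp add: field_simps)
        finally show "norm (m s / s^n) \<le> K * \<bar>s\<bar>" .
      qed
      show "((\<lambda>s. K * \<bar>s\<bar>) \<longlongrightarrow> 0) (at 0 within {0..R})"
        by (auto intro!: tendsto_eq_intros)
    qed
    moreover have e: "m 0 / (0::real) ^ n = 0" using n by (simp add: zero_power)
    ultimately show ?thesis unfolding continuous_within True e by blast
  next
    case False
    have "continuous (at x within {0..R}) m"
      using cm x by (simp add: continuous_on_eq_continuous_within)
    then show ?thesis using False
      by (intro continuous_intros) auto
  qed
qed

lemma poly_bound:
  fixes x :: real assumes "0 < x" "x < 1/4"
  shows "(1+4*x)*(1+8*x)*(x/4)*(1 + 4/5*(x*(1+2*x))) \<le> 2*x"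
proof -
  have a: "(1+4*x) \<le> 2" "1+8*x \<le> 3" "1 + 4/5*(x*(1+2*x)) \<le> 13/10"
  proof -
    have "x*(1+2*x) \<le> (1/4)*(3/2)" using assms by (intro mult_mono) auto
    then show "(1+4*x) \<le> 2" "1+8*x \<le> 3" "1 + 4/5*(x*(1+2*x)) \<le> 13/10" using assms by auto
  qed
  have "(1+4*x)*(1+8*x)*(1 + 4/5*(x*(1+2*x))) \<le> 2*3*(13/10)"
    using a assms by (intro mult_mono) (auto intro: mult_nonneg_nonneg)
  then have "(1+4*x)*(1+8*x)*(1 + 4/5*(x*(1+2*x))) * (x/4) \<le> 2*3*(13/10) * (x/4)"
    using assms by (intro mult_right_mono) auto
  then have "(1+4*x)*(1+8*x)*(1 + 4/5*(x*(1+2*x))) * (x/4) \<le> 2*x" using assms by linarith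
  then show ?thesis by (simp add: ac_simps)
qed

lemma poly_integral:
  fixes a1 a3 R :: real assumes "0 \<le> R"
  shows "((\<lambda>s. a1* s + a3* s^3) has_integral (a1*R^2/2 + a3*R^4/4)) {0..R}"
proof -
  have "((\<lambda>s. a1* s + a3* s^3) has_integral ((\<lambda>s. a1* s^2/2 + a3* s^4/4) R - (\<lambda>s. a1* s^2/2 + a3* s^4/4) 0)) {0..R}"
    using assms
    by (intro fundamental_theorem_of_calculus)
       (auto intro!: derivative_eq_intros simp: has_real_derivative_iff_has_vector_derivative[symmetric])
  then show ?thesis by simp
qed

theorem mainTheorem2:
  fixes R :: real and m rho :: "real \<Rightarrow> real"
  assumes "0 < R" and "R < 1/2 * sqrt (3 / (8 * pi))"
    and "(m, rho) \<in> C0 R"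
  shows "T_op R (m, rho) \<in> C0 R"
proof -
  define k where "k = rho_star R"
  define x where "x = 8*pi/3*R^2"
  have Rpos: "0 < R" using assms(1) .
  have cm: "continuous_on {0..R} m" and cr: "continuous_on {0..R} rho"
    and bnd: "\<And>s. s \<in> {0..R} \<Longrightarrow> 0 \<le> m s \<and> m s \<le> 4 * pi / 3 * k * s^3 \<and> 0 \<le> rho s \<and> rho s \<le> k"
    using assms(3) by (auto simp: C0_def k_def)
  have k2x: "k = 2*x" by (simp add: k_def x_def rho_star_def)
  have xpos: "0 < x" using Rpos by (simp add: x_def)
  have "R^2 < (1/2 * sqrt (3 / (8 * pi)))^2"
    using Rpos assms(2) by (intro power_strict_mono) auto
  also have "\<dots> = 3/(32*pi)" by (simp add: power_divide)
  finally have "R^2 < 3/(32*pi)" .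
  then have "8*pi/3*R^2 < 8*pi/3*(3/(32*pi))" by (intro mult_strict_left_mono) auto
  then have x14: "x < 1/4" by (simp add: x_def)
  have kpos: "0 < k" using k2x xpos by simp
  define a where "a = 8*pi/3*(1+k)"
  have apos: "0 < a" using kpos by (simp add: a_def)
  have aR: "a*R^2 = x*(1+2*x)" by (simp add: a_def x_def k2x)
  have aR38: "a*R^2 \<le> 3/8"
  proof -
    have "x*(1+2*x) \<le> (1/4)*(3/2)" using xpos x14 by (intro mult_mono) auto
    then show ?thesis using aR by simp
  qed
  have h1b: "0 \<le> m s / s \<and> m s / s \<le> 4*pi/3*k* s^2" if s: "s \<in> {0..R}" for s
  proof (cases "s = 0")
    case True then show ?thesis using kpos by simp
  next
    case False
    then have sp: "s > 0" using s by auto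
    have "m s / s \<le> 4*pi/3*k* s^3 / s" using bnd[OF s] sp by (intro divide_right_mono) auto
    also have "\<dots> = 4*pi/3*k* s^2" using sp by (simp add: power3_eq_cube power2_eq_square)
    finally show ?thesis using bnd[OF s] sp by auto
  qed
  have h2b: "0 \<le> m s / s^2 \<and> m s / s^2 \<le> 4*pi/3*k* s" if s: "s \<in> {0..R}" for s
  proof (cases "s = 0")
    case True then show ?thesis using kpos by simp
  next
    case False
    then have sp: "s > 0" using s by auto
    have "m s / s^2 \<le> 4*pi/3*k* s^3 / s^2" using bnd[OF s] sp by (intro divide_right_mono) auto
    also have "\<dots> = 4*pi/3*k* s" using sp by (simp add: power3_eq_cube power2_eq_square)
    finally show ?thesis using bnd[OF s] sp by auto
  qed
  have ch1: "continuous_on {0..R} (\<lambda>s. m s / s^1)"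
  proof (rule squeeze_cont[OF cm, of 1 "4*pi/3*k*R"])
    fix s assume s: "s \<in> {0..R}"
    have "\<bar>m s\<bar> \<le> 4*pi/3*k* s^3" using bnd[OF s] by simp
    also have "4*pi/3*k* s^3 = (4*pi/3*k* s^2)* s" by (simp add: power3_eq_cube power2_eq_square)
    also have "\<dots> \<le> (4*pi/3*k* s^2)*R" using s kpos by (intro mult_left_mono) auto
    also have "\<dots> = 4*pi/3*k*R * s^(1+1)" by (simp add: power2_eq_square)
    finally show "\<bar>m s\<bar> \<le> 4*pi/3*k*R * s^(1+1)" .
  qed simp
  have ch2: "continuous_on {0..R} (\<lambda>s. m s / s^2)"
    by (rule squeeze_cont[OF cm, of 2 "4*pi/3*k"]) (use bnd in auto)
  define D where "D s = 1 - 8*pi/3* s^2 - 2*(m s / s)" for s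
  define F where "F s = (1 + 2*rho s) / D s * (4*pi* s/3*(1+3*rho s) + m s / s^2)" for s
  have Dlow: "D s \<ge> 1 - a* s^2" "a* s^2 \<le> 3/8" "0 \<le> a* s^2" if s: "s \<in> {0..R}" for s
  proof -
    have u: "m s / s \<le> 4*pi/3*k* s^2" using h1b[OF s] by blast
    have "k*(8*pi/3)* s^2 = 2*(4*pi/3*k* s^2)" by (simp add: algebra_simps)
    then have "2*(m s / s) \<le> k*(8*pi/3)* s^2" using u by linarith
    then show "D s \<ge> 1 - a* s^2" by (simp add: D_def a_def algebra_simps)
    have "a* s^2 \<le> a*R^2" using s apos by (intro mult_left_mono power_mono) auto
    then show "a* s^2 \<le> 3/8" using aR38 by simp
    show "0 \<le> a* s^2" using apos by simp
  qed
  have Dpos: "D s > 0" if s: "s \<in> {0..R}" for s using Dlow[OF s] by linarith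
  have Fcont: "continuous_on {0..R} F"
  proof -
    have cD: "continuous_on {0..R} D"
      unfolding D_def using ch1
      by (intro continuous_on_diff[OF _ continuous_on_mult[OF continuous_on_const]])
         (auto intro!: continuous_intros)
    have "continuous_on {0..R} (\<lambda>s. (1 + 2*rho s) / D s)"
      using cD cr Dpos by (intro continuous_intros) (auto dest: Dpos)
    moreover have "continuous_on {0..R} (\<lambda>s. 4*pi* s/3*(1+3*rho s) + m s / s^2)"
      using cr ch2 by (intro continuous_on_add[OF _ ch2]) (auto intro!: continuous_intros)
    ultimately show ?thesis unfolding F_def by (rule continuous_on_mult)
  qed
  have integrand: "(1 + 2 * rho s) / (1 - 8 * pi / 3 * s^2 - 2 * m s / s) *
      (4 * pi * s / 3) * (1 + 3 * rho s + 3 * m s / (4 * pi * s^3)) = F s" for s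
  proof (cases "s = 0")
    case True then show ?thesis by (simp add: F_def)
  next
    case False
    have e1: "2 * m s / s = 2*(m s / s)" by simp
    have e2: "(4 * pi * s / 3) * (1 + 3 * rho s + 3 * m s / (4 * pi * s^3)) = 4*pi* s/3*(1+3*rho s) + m s / s^2"
      using False by (simp add: field_simps power3_eq_cube power2_eq_square)
    show ?thesis unfolding F_def D_def e1 mult.assoc[symmetric, of "(1 + 2 * rho s) / _"]
      by (subst mult.assoc, subst e2) simp
  qed
  have Peq: "P_op R m rho = (\<lambda>r. integral {r..R} F)"
    unfolding P_op_def integrand ..
  have Fint: "F integrable_on {0..R}" using Fcont by (rule integrable_continuous_real)
  have Fnn: "F s \<ge> 0" if s: "s \<in> {0..R}" for s
  proof -
    have "0 \<le> (1 + 2*rho s) / D s" using bnd[OF s] Dpos[OF s] by simp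
    moreover have "0 \<le> 4*pi* s/3*(1+3*rho s) + m s / s^2" using bnd[OF s] h2b[OF s] s by auto
    ultimately show ?thesis unfolding F_def by (rule mult_nonneg_nonneg)
  qed
  define c1 where "c1 = (1+2*k)*(4*pi/3*(1+4*k))"
  define c3 where "c3 = c1*(8/5*a)"
  define g where "g s = c1 * s + c3 * s^3" for s
  have Fg: "F s \<le> g s" if s: "s \<in> {0..R}" for s
  proof -
    define t where "t = a* s^2"
    have t: "0 \<le> t" "t \<le> 3/8" "D s \<ge> 1 - t" using Dlow[OF s] by (auto simp: t_def)
    have "1/D s \<le> 1/(1-t)" using t by (intro divide_left_mono) auto
    also have "\<dots> \<le> 1 + 8/5*t"
    proof -
      have "t*t \<le> 3/8*t" using t by (intro mult_right_mono) auto
      then have "1 \<le> (1 + 8/5*t)*(1-t)" by (simp add: algebra_simps)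
      then show ?thesis using t by (simp add: divide_le_eq)
    qed
    finally have iD: "1/D s \<le> 1 + 8/5*t" .
    have N2: "4*pi* s/3*(1+3*rho s) + m s / s^2 \<le> 4*pi/3*(1+4*k)* s"
    proof -
      have "4*pi* s/3*(1+3*rho s) \<le> 4*pi* s/3*(1+3*k)" using bnd[OF s] s by (intro mult_left_mono) auto
      moreover have "m s / s^2 \<le> 4*pi/3*k* s" using h2b[OF s] by blast
      moreover have "4*pi/3*(1+4*k)* s = 4*pi* s/3*(1+3*k) + 4*pi/3*k* s" by (simp add: algebra_simps)
      ultimately show ?thesis by linarith
    qed
    have "F s = (1 + 2*rho s) * (1/D s) * (4*pi* s/3*(1+3*rho s) + m s / s^2)" by (simp add: F_def)
    also have "\<dots> \<le> (1+2*k) * (1 + 8/5*t) * (4*pi/3*(1+4*k)* s)"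
      using bnd[OF s] iD N2 Dpos[OF s] h2b[OF s] s t kpos
      by (intro mult_mono) (auto intro!: mult_nonneg_nonneg add_nonneg_nonneg)
    also have "\<dots> = g s" unfolding g_def c1_def c3_def t_def power3_eq_cube power2_eq_square by (simp add: field_simps)
    finally show ?thesis .
  qed
  have gint: "(g has_integral (c1*R^2/2 + c3*R^4/4)) {0..R}"
    unfolding g_def using Rpos by (intro poly_integral) simp
  have gval: "c1*R^2/2 + c3*R^4/4 \<le> k"
  proof -
    have R2: "R^2 = 3*x/(8*pi)" by (simp add: x_def)
    have R4: "R^4 = (R^2)^2" by simp
    have "c1*R^2/2 + c3*R^4/4 = (1+4*x)*(1+8*x)*(x/4)*(1 + 4/5*(x*(1+2*x)))"
      unfolding c3_def c1_def a_def R4 R2 k2x by (simp add: field_simps power2_eq_square)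
    also have "\<dots> \<le> 2*x" using poly_bound xpos x14 by blast
    finally show ?thesis using k2x by simp
  qed
  have gnn: "g s \<ge> 0" if "s \<in> {0..R}" for s using Fg[OF that] Fnn[OF that] by simp
  have gi: "g integrable_on {0..R}" using gint by blast
  have Pbounds: "0 \<le> integral {r..R} F \<and> integral {r..R} F \<le> k" if r: "r \<in> {0..R}" for r
  proof -
    have sub: "{r..R} \<subseteq> {0..R}" using r by auto
    have Fi: "F integrable_on {r..R}" using Fint sub integrable_on_subinterval by blast
    have gir: "g integrable_on {r..R}" using gi sub integrable_on_subinterval by blast
    have "integral {r..R} F \<le> integral {r..R} g" using Fi gir Fg sub by (intro integral_le) auto
    also have "\<dots> \<le> integral {0..R} g" using sub gir gi gnn by (intro integral_subset_le) auto
    also have "\<dots> = c1*R^2/2 + c3*R^4/4" using gint by (rule integral_unique)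
    finally have "integral {r..R} F \<le> k" using gval by simp
    moreover have "0 \<le> integral {r..R} F" using Fi Fnn sub by (intro integral_nonneg) auto
    ultimately show ?thesis by simp
  qed
  have Pcont: "continuous_on {0..R} (\<lambda>r. integral {r..R} F)"
    using Fint by (rule indefinite_integral_continuous_1')
  define q where "q s = 4 * pi * s^2 * rho s" for s
  have qint: "q integrable_on {0..R}" unfolding q_def
    using cr by (intro integrable_continuous_real) (auto intro!: continuous_intros)
  have Mcont: "continuous_on {0..R} (\<lambda>r. integral {0..r} q)"
    using qint by (rule indefinite_integral_continuous_1)
  have Mbounds: "0 \<le> integral {0..r} q \<and> integral {0..r} q \<le> 4 * pi / 3 * k * r^3" if r: "r \<in> {0..R}" for r
  proof -
    have sub: "{0..r} \<subseteq> {0..R}" using r by auto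
    have qi: "q integrable_on {0..r}" using qint sub integrable_on_subinterval by blast
    have ph: "((\<lambda>s. 4*pi*k* s^2) has_integral (4*pi*k*r^3/3 - 4*pi*k*0^3/3)) {0..r}"
      using r by (intro fundamental_theorem_of_calculus)
         (auto intro!: derivative_eq_intros simp: has_real_derivative_iff_has_vector_derivative[symmetric])
    have "integral {0..r} q \<le> integral {0..r} (\<lambda>s. 4*pi*k* s^2)"
    proof (intro integral_le)
      show "q integrable_on {0..r}" by (rule qi)
      show "(\<lambda>s. 4*pi*k* s^2) integrable_on {0..r}" using ph by blast
      fix s assume "s \<in> {0..r}"
      then have s: "s \<in> {0..R}" using r by auto
      have "4*pi* s^2 * rho s \<le> 4*pi* s^2 * k" using bnd[OF s] by (intro mult_left_mono) auto
      then show "q s \<le> 4*pi*k* s^2" by (simp add: q_def algebra_simps)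
    qed
    also have "\<dots> = 4 * pi / 3 * k * r^3" using integral_unique[OF ph] by simp
    finally have "integral {0..r} q \<le> 4 * pi / 3 * k * r^3" .
    moreover have "0 \<le> integral {0..r} q" using qi sub bnd by (intro integral_nonneg) (auto simp: q_def)
    ultimately show ?thesis by simp
  qed
  have Meq: "M_op rho = (\<lambda>r. integral {0..r} q)" unfolding M_op_def q_def ..
  show ?thesis
    unfolding T_op_def C0_def Peq Meq fst_conv snd_conv
    using Mcont Pcont Mbounds Pbounds by (auto simp: k_def)
qed

end
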